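(* Let $(K,\mathrm{val})$ be a $2$-henselian valued field whose residue class field $F$ has characteristic $\neq2$ and is formally real, and suppose $(K,\mathrm{val})$ admits an angular component map $\mathrm{an}:K^\times\to F^\times$ (used as $\mathrm{p.an}$ in the definition of $\Phi^A$). Let $A$ be a subring with $B\subseteq A\subseteq K$ and let $f\in A\setminus\{0\}$. Then the quasi-quadratic module in $A$ generated by $f$, namely $\{f(u_1^2+\cdots+u_m^2): m\ge0,\ u_i\in A\}$, equals $\Phi^A(M_f,[\![\mathrm{val}(f)]\!])$, where $M_f=\{\mathrm{an}(f)(c_1^2+\cdots+c_m^2): m\ge 0,\ c_i\in F\}$ is the quasi-quadratic module of $F$ generated by $\mathrm{an}(f)$.
   Context: Let $(G,\le)$ be a totally ordered abelian group written multiplicatively with identity $e$; $G_{\ge e}=\{g\in G:g\ge e\}$, $G^2=\{g^2:g\in G\}$. Let $(K,\mathrm{val})$ be a valued field with surjective valuation $\mathrm{val}:K\to G\cup\{\infty\}$, valuation ring $B=\{x:\mathrm{val}(x)\ge e\}$, residue map $\pi:B\to F$, residue field $F$. A strict unit is $x\in B^\times$ with $\pi(x)=1$; when $\mathrm{char}F\ne2$, $2$-henselian is equivalent to every strict unit being a square in $K$. For a subring $A$ with $B\subseteq A\subseteq K$ put $H=\mathrm{val}(A^\times)$. For $g\in G$: $\overline g$ is its class in $G/G^2$, $[\![g]\!]$ its class in $G/H^2$; "$\mathrm{val}(x)=\overline g$" means $\overline{\mathrm{val}(x)}=\overline g$, similarly for $[\![\cdot]\!]$. A quasi-quadratic module in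 a commutative ring $R$ is a subset $M\subseteq R$ with $M+M\subseteq M$ and $a^2M\subseteq M$ for all $a\in R$. A pseudo-angular component map is a map $\mathrm{p.an}:K^\times\to F^\times$ such that: (1) $\mathrm{p.an}(u)=\pi(u)$ for $u\in B^\times$; (2) $\mathrm{p.an}(ux)=\pi(u)\mathrm{p.an}(x)$ for $u\in B^\times,x\in K^\times$; (3) for all $g\in G$, $c\in F^\times$ there is $w\in K$ with $\mathrm{val}(w)=g$, $\mathrm{p.an}(w)=c$; (4) for nonzero $x_1,x_2$ with $x_1+x_2\ne0$: if $\mathrm{val}(x_1)<\mathrm{val}(x_2)$ then $\mathrm{p.an}(x_1+x_2)=\mathrm{p.an}(x_1)$; if $\mathrm{val}(x_1)=\mathrm{val}(x_2)$ and $\mathrm{p.an}(x_1)+\mathrm{p.an}(x_2)\ne0$ then $\mathrm{val}(x_1+x_2)=\mathrm{val}(x_1)$ and $\mathrm{p.an}(x_1+x_2)=\mathrm{p.an}(x_1)+\mathrm{p.an}(x_2)$; (5) if $x,y\in K^\times$, $\overline{\mathrm{val}(x)}=\overline{\mathrm{val}(y)}$ and $\mathrm{p.an}(x)=\mathrm{p.an}(y)$ then $y=u^2x$ for some $u\in K^\times$; (6) for $a,u\in K^\times$ there is $k\in F^\times$ with $\mathrm{p.an}(au^2)=\mathrm{p.an}(a)k^2$. An angular component map $\mathrm{an}$ is a pseudo-angular component map that is a group homomorphism. $\Phi^A(M,[\![g]\!])=\{x\in A\setminus\{0\}:\ \mathrm{val}(x)=\overline g,\ (\mathrm{val}(x)=[\![g]\!]\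 \text{or}\ \mathrm{val}(x)>g),\ \mathrm{an}(x)\in M\}\cup\{0\}$. *)

theory Defs
  imports Main
begin

text \<open>The valuation is a map val from K to G, only meaningful on nonzero elements
  (val 0 = infinity is handled by explicit case distinctions).\<close>

definition valuation :: "('k::field \<Rightarrow> 'g::linordered_ab_group_add) \<Rightarrow> bool" where
  "valuation val \<longleftrightarrow>
     (\<forall>x y. x \<noteq> 0 \<longrightarrow> y \<noteq> 0 \<longrightarrow> val (x * y) = val x + val y) \<and>
     (\<forall>x y. x \<noteq> 0 \<longrightarrow> y \<noteq> 0 \<longrightarrow> x + y \<noteq> 0 \<longrightarrow> min (val x) (val y) \<le> val (x + y)) \<and>
     (\<forall>g. \<exists>x. x \<noteq> 0 \<and> val x = g)"

definition val_ring :: "('k::field \<Rightarrow> 'g::linordered_ab_group_add) \<Rightarrow> 'k set" where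
  "val_ring val = {x. x = 0 \<or> 0 \<le> val x}"

definition val_units :: "('k::field \<Rightarrow> 'g::linordered_ab_group_add) \<Rightarrow> 'k set" where
  "val_units val = {x. x \<noteq> 0 \<and> val x = 0}"

definition residue_map :: "('k::field \<Rightarrow> 'g::linordered_ab_group_add) \<Rightarrow> ('k \<Rightarrow> 'f::field) \<Rightarrow> bool" where
  "residue_map val pi \<longleftrightarrow>
     (\<forall>x\<in>val_ring val. \<forall>y\<in>val_ring val. pi (x + y) = pi x + pi y \<and> pi (x * y) = pi x * pi y) \<and>
     pi 1 = 1 \<and>
     (\<forall>c. \<exists>x\<in>val_ring val. pi x = c) \<and>
     (\<forall>x\<in>val_ring val. pi x = 0 \<longleftrightarrow> (x = 0 \<or> 0 < val x))"

definition strict_unit :: "('k::field \<Rightarrow> 'g::linordered_ab_group_add) \<Rightarrow> ('k \<Rightarrow> 'f::field) \<Rightarrow> 'k \<Rightarrow> bool" where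
  "strict_unit val pi x \<longleftrightarrow> x \<in> val_units val \<and> pi x = 1"

text \<open>2-henselian (for residue characteristic not 2): every strict unit is a square in K.\<close>
definition two_henselian :: "('k::field \<Rightarrow> 'g::linordered_ab_group_add) \<Rightarrow> ('k \<Rightarrow> 'f::field) \<Rightarrow> bool" where
  "two_henselian val pi \<longleftrightarrow> (\<forall>x. strict_unit val pi x \<longrightarrow> (\<exists>y. x = y\<^sup>2))"

definition formally_real :: "'f::field itself \<Rightarrow> bool" where
  "formally_real _ \<longleftrightarrow> (\<forall>cs :: 'f list. sum_list (map (\<lambda>c. c\<^sup>2) cs) \<noteq> - 1)"

text \<open>Classes modulo G^2 (g = 2h in additive notation).\<close>
definition same_class_G2 :: "'g::linordered_ab_group_add \<Rightarrow> 'g \<Rightarrow> bool" where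
  "same_class_G2 a g \<longleftrightarrow> (\<exists>h. a - g = h + h)"

definition pseudo_angular_component ::
  "('k::field \<Rightarrow> 'g::linordered_ab_group_add) \<Rightarrow> ('k \<Rightarrow> 'f::field) \<Rightarrow> ('k \<Rightarrow> 'f) \<Rightarrow> bool" where
  "pseudo_angular_component val pi pan \<longleftrightarrow>
     (\<forall>x. x \<noteq> 0 \<longrightarrow> pan x \<noteq> 0) \<and>
     (\<forall>u\<in>val_units val. pan u = pi u) \<and>
     (\<forall>u\<in>val_units val. \<forall>x. x \<noteq> 0 \<longrightarrow> pan (u * x) = pi u * pan x) \<and>
     (\<forall>g c. c \<noteq> 0 \<longrightarrow> (\<exists>w. w \<noteq> 0 \<and> val w = g \<and> pan w = c)) \<and>
     (\<forall>x1 x2. x1 \<noteq> 0 \<longrightarrow> x2 \<noteq> 0 \<longrightarrow> x1 + x2 \<noteq> 0 \<longrightarrow>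
        (val x1 < val x2 \<longrightarrow> pan (x1 + x2) = pan x1) \<and>
        (val x1 = val x2 \<longrightarrow> pan x1 + pan x2 \<noteq> 0 \<longrightarrow>
           val (x1 + x2) = val x1 \<and> pan (x1 + x2) = pan x1 + pan x2)) \<and>
     (\<forall>x y. x \<noteq> 0 \<longrightarrow> y \<noteq> 0 \<longrightarrow> same_class_G2 (val x) (val y) \<longrightarrow> pan x = pan y \<longrightarrow>
        (\<exists>u. u \<noteq> 0 \<and> y = u\<^sup>2 * x)) \<and>
     (\<forall>a u. a \<noteq> 0 \<longrightarrow> u \<noteq> 0 \<longrightarrow> (\<exists>k. k \<noteq> 0 \<and> pan (a * u\<^sup>2) = pan a * k\<^sup>2))"

definition angular_component ::
  "('k::field \<Rightarrow> 'g::linordered_ab_group_add) \<Rightarrow> ('k \<Rightarrow> 'f::field) \<Rightarrow> ('k \<Rightarrow> 'f) \<Rightarrow> bool" where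
  "angular_component val pi an \<longleftrightarrow> pseudo_angular_component val pi an \<and>
     (\<forall>x y. x \<noteq> 0 \<longrightarrow> y \<noteq> 0 \<longrightarrow> an (x * y) = an x * an y)"

definition is_subring :: "'k::field set \<Rightarrow> bool" where
  "is_subring A \<longleftrightarrow> 1 \<in> A \<and> (\<forall>x\<in>A. \<forall>y\<in>A. x + y \<in> A \<and> x * y \<in> A \<and> - x \<in> A)"

definition H_grp :: "('k::field \<Rightarrow> 'g::linordered_ab_group_add) \<Rightarrow> 'k set \<Rightarrow> 'g set" where
  "H_grp val A = val ` {x \<in> A. x \<noteq> 0 \<and> inverse x \<in> A}"

definition same_class_H2 :: "('k::field \<Rightarrow> 'g::linordered_ab_group_add) \<Rightarrow> 'k set \<Rightarrow> 'g \<Rightarrow> 'g \<Rightarrow> bool" where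
  "same_class_H2 val A a g \<longleftrightarrow> (\<exists>h\<in>H_grp val A. a - g = h + h)"

definition Phi :: "('k::field \<Rightarrow> 'g::linordered_ab_group_add) \<Rightarrow> ('k \<Rightarrow> 'f::field) \<Rightarrow> 'k set
     \<Rightarrow> 'f set \<Rightarrow> 'g \<Rightarrow> 'k set" where
  "Phi val an A M g = {x \<in> A. x \<noteq> 0 \<and> same_class_G2 (val x) g \<and>
       (same_class_H2 val A (val x) g \<or> g < val x) \<and> an x \<in> M} \<union> {0}"

definition qqm_gen :: "'a::comm_ring_1 set \<Rightarrow> 'a \<Rightarrow> 'a set" where
  "qqm_gen S a = {a * sum_list (map (\<lambda>u. u\<^sup>2) us) | us. set us \<subseteq> S}"

end

theory Submission
  imports Defs
begin

lemma double_zero: "(h::'g::linordered_ab_group_add) + h = 0 \<Longrightarrow> h = 0"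
  by (metis add_neg_neg add_pos_pos less_irrefl linorder_neqE)

lemma double_pos: "0 < (h::'g::linordered_ab_group_add) + h \<Longrightarrow> 0 < h"
  by (metis add_nonpos_nonpos not_le)

locale vf =
  fixes val :: "'k::field \<Rightarrow> 'g::linordered_ab_group_add" and pi :: "'k \<Rightarrow> 'f::field"
  assumes V: "valuation val" and R: "residue_map val pi"
begin

lemma vmult: "x \<noteq> 0 \<Longrightarrow> y \<noteq> 0 \<Longrightarrow> val (x*y) = val x + val y"
  using V unfolding valuation_def by blast

lemma vone: "val 1 = 0" using vmult[of 1 1] by simp

lemma vinv: "x \<noteq> 0 \<Longrightarrow> val (inverse x) = - val x"
proof -
  assume x: "x \<noteq> 0"
  have "val x + val (inverse x) = 0" using vmult[of x "inverse x"] vone x by simp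
  thus ?thesis by (metis add.commute eq_neg_iff_add_eq_0)
qed

lemma vsurj: "\<exists>x. x \<noteq> 0 \<and> val x = g" using V unfolding valuation_def by blast

lemma vultra: "x \<noteq> 0 \<Longrightarrow> y \<noteq> 0 \<Longrightarrow> x + y \<noteq> 0 \<Longrightarrow> min (val x) (val y) \<le> val (x + y)"
  using V unfolding valuation_def by blast

lemma B0: "0 \<in> val_ring val" by (simp add: val_ring_def)
lemma B1: "1 \<in> val_ring val" using vone by (simp add: val_ring_def)

lemma Bmult: "x \<in> val_ring val \<Longrightarrow> y \<in> val_ring val \<Longrightarrow> x * y \<in> val_ring val"
  unfolding val_ring_def using vmult by fastforce

lemma Badd: "x \<in> val_ring val \<Longrightarrow> y \<in> val_ring val \<Longrightarrow> x + y \<in> val_ring val"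
proof -
  assume a: "x \<in> val_ring val" "y \<in> val_ring val"
  show ?thesis
  proof (cases "x = 0 \<or> y = 0 \<or> x + y = 0")
    case True then show ?thesis using a by (auto simp: val_ring_def)
  next
    case False
    then have "min (val x) (val y) \<le> val (x + y)" using vultra by blast
    moreover have "0 \<le> min (val x) (val y)" using a False by (auto simp: val_ring_def)
    ultimately have "0 \<le> val (x + y)" by (metis order_trans)
    then show ?thesis by (simp add: val_ring_def)
  qed
qed

lemma pi_add: "x \<in> val_ring val \<Longrightarrow> y \<in> val_ring val \<Longrightarrow> pi (x + y) = pi x + pi y"
  using R unfolding residue_map_def by blast
lemma pi_mult: "x \<in> val_ring val \<Longrightarrow> y \<in> val_ring val \<Longrightarrow> pi (x * y) = pi x * pi y"
  using R unfolding residue_map_def by blast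
lemma pi1: "pi 1 = 1" using R unfolding residue_map_def by blast
lemma pi_surj: "\<exists>x\<in>val_ring val. pi x = c" using R unfolding residue_map_def by blast
lemma pi_zero_iff: "x \<in> val_ring val \<Longrightarrow> pi x = 0 \<longleftrightarrow> (x = 0 \<or> 0 < val x)"
  using R unfolding residue_map_def by blast
lemma pi0: "pi 0 = 0" using pi_add[OF B0 B0] by (metis add_0 add_cancel_right_right)

lemma unit_of_pi: "x \<in> val_ring val \<Longrightarrow> pi x \<noteq> 0 \<Longrightarrow> x \<noteq> 0 \<and> val x = 0"
  using pi_zero_iff[of x] by (auto simp: val_ring_def)

lemma sumsq_B: "set bs \<subseteq> val_ring val \<Longrightarrow>
   sum_list (map (\<lambda>u. u^2) bs) \<in> val_ring val \<and>
   pi (sum_list (map (\<lambda>u. u^2) bs)) = sum_list (map (\<lambda>u. (pi u)^2) bs)"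
proof (induction bs)
  case Nil then show ?case by (simp add: B0 pi0)
next
  case (Cons b bs)
  then have b: "b \<in> val_ring val" and IH: "sum_list (map (\<lambda>u. u^2) bs) \<in> val_ring val"
     "pi (sum_list (map (\<lambda>u. u^2) bs)) = sum_list (map (\<lambda>u. (pi u)^2) bs)" by auto
  have b2: "b^2 \<in> val_ring val" using Bmult[OF b b] by (simp add: power2_eq_square)
  have "pi (b^2) = (pi b)^2" using pi_mult[OF b b] by (simp add: power2_eq_square)
  then show ?case using Badd[OF b2 IH(1)] pi_add[OF b2 IH(1)] IH(2) by simp
qed

lemma sumsq_decomp:
  assumes FR: "formally_real TYPE('f)" and u: "u \<in> set us" "u \<noteq> 0"
  shows "\<exists>v w. v \<in> set us \<and> v \<noteq> 0 \<and> w \<in> val_ring val \<and> w \<noteq> 0 \<and> val w = 0 \<and>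
     sum_list (map (\<lambda>u. u^2) us) = v^2 * w \<and> (\<exists>cs. pi w = sum_list (map (\<lambda>c. c^2) cs))"
proof -
  define S where "S = {u \<in> set us. u \<noteq> 0}"
  have fS: "finite (val ` S)" "val ` S \<noteq> {}" using u by (auto simp: S_def)
  then have "Min (val ` S) \<in> val ` S" by (rule Min_in)
  then obtain v where v: "v \<in> S" "val v = Min (val ` S)" by auto
  have vmin: "\<And>x. x \<in> S \<Longrightarrow> val v \<le> val x" using v fS by simp
  have v0: "v \<noteq> 0" "v \<in> set us" using v by (auto simp: S_def)
  define vs where "vs = map (\<lambda>u. u / v) us"
  have vsB: "set vs \<subseteq> val_ring val"
  proof
    fix y assume "y \<in> set vs"
    then obtain x where x: "x \<in> set us" "y = x / v" by (auto simp: vs_def)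
    show "y \<in> val_ring val"
    proof (cases "x = 0")
      case True then show ?thesis using x B0 by simp
    next
      case False
      then have "val y = val x + - val v" using x v0 vmult[of x "inverse v"] vinv[of v]
        by (simp add: divide_inverse)
      moreover have "val v \<le> val x" using vmin x False by (simp add: S_def)
      ultimately show ?thesis by (simp add: val_ring_def)
    qed
  qed
  define w where "w = sum_list (map (\<lambda>u. u^2) vs)"
  have wB: "w \<in> val_ring val" and piw: "pi w = sum_list (map (\<lambda>c. c^2) (map pi vs))"
    using sumsq_B[OF vsB] by (simp_all add: w_def o_def)
  have "1 \<in> set vs" using v0 by (force simp: vs_def)
  then have "1 \<in> set (map pi vs)" using pi1 by force
  then have "pi w = 1^2 + sum_list (map (\<lambda>c. c^2) (remove1 1 (map pi vs)))"
    using piw sum_list_map_remove1 by metis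
  moreover have "sum_list (map (\<lambda>c. c^2) (remove1 1 (map pi vs))) \<noteq> -1"
    using FR unfolding formally_real_def by blast
  ultimately have "pi w \<noteq> 0" by (metis add.commute add_eq_0_iff2 power_one)
  then have w: "w \<noteq> 0" "val w = 0" using unit_of_pi wB by auto
  have "sum_list (map (\<lambda>u. u^2) us) = sum_list (map (\<lambda>u. v^2 * (u/v)^2) us)"
    using v0 by (intro arg_cong[where f=sum_list] map_cong) (auto simp: field_simps)
  also have "\<dots> = v^2 * w" by (simp add: sum_list_const_mult w_def vs_def o_def)
  finally show ?thesis using v0 wB w piw by blast
qed

end


theorem mainTheorem14:
  fixes val :: "'k::field \<Rightarrow> 'g::linordered_ab_group_add"
    and pi :: "'k \<Rightarrow> 'f::field"
    and an :: "'k \<Rightarrow> 'f"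
    and A :: "'k set"
    and f :: 'k
  assumes "valuation val"
    and "residue_map val pi"
    and "(2::'f) \<noteq> 0"
    and "formally_real TYPE('f)"
    and "two_henselian val pi"
    and "angular_component val pi an"
    and "is_subring A"
    and "val_ring val \<subseteq> A"
    and "f \<in> A" and "f \<noteq> 0"
  shows "qqm_gen A f = Phi val an A (qqm_gen UNIV (an f)) (val f)"
proof -
  interpret vf val pi using assms(1,2) by unfold_locales
  have Amult: "\<And>x y. x \<in> A \<Longrightarrow> y \<in> A \<Longrightarrow> x * y \<in> A" using assms(7) by (simp add: is_subring_def)
  have BA: "\<And>x. x \<in> val_ring val \<Longrightarrow> x \<in> A" using assms(8) by blast
  have an_nz: "\<And>x. x \<noteq> 0 \<Longrightarrow> an x \<noteq> 0"
    using assms(6) by (simp add: angular_component_def pseudo_angular_component_def)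
  have an_unit: "\<And>u. u \<in> val_units val \<Longrightarrow> an u = pi u"
    using assms(6) by (simp add: angular_component_def pseudo_angular_component_def)
  have an_mult: "\<And>x y. x \<noteq> 0 \<Longrightarrow> y \<noteq> 0 \<Longrightarrow> an (x * y) = an x * an y"
    using assms(6) by (simp add: angular_component_def)
  show ?thesis
  proof (intro set_eqI iffI)
    fix x assume "x \<in> qqm_gen A f"
    then obtain us where x: "x = f * sum_list (map (\<lambda>u. u^2) us)" and usA: "set us \<subseteq> A"
      by (auto simp: qqm_gen_def)
    show "x \<in> Phi val an A (qqm_gen UNIV (an f)) (val f)"
    proof (cases "\<exists>u\<in>set us. u \<noteq> 0")
      case False
      then have "sum_list (map (\<lambda>u. u^2) us) = 0" by (induction us) auto
      then show ?thesis using x by (simp add: Phi_def)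
    next
      case True
      then obtain u where "u \<in> set us" "u \<noteq> 0" by blast
      from sumsq_decomp[OF assms(4) this] obtain v w cs where
        v: "v \<in> set us" "v \<noteq> 0" and w: "w \<in> val_ring val" "w \<noteq> 0" "val w = 0"
        and s: "sum_list (map (\<lambda>u. u^2) us) = v^2 * w"
        and cs: "pi w = sum_list (map (\<lambda>c. c^2) cs)" by blast
      have vA: "v \<in> A" using v usA by blast
      have xe: "x = f * (v * v) * w" using x s by (simp add: power2_eq_square mult.assoc)
      have x0: "x \<noteq> 0" using xe v w assms(10) by simp
      have xA: "x \<in> A" using xe Amult vA BA w assms(9) by simp
      have vx: "val x = val f + (val v + val v)"
        using xe vmult v w assms(10) by simp
      have G2: "same_class_G2 (val x) (val f)" using vx unfolding same_class_G2_def by (intro exI[of _ "val v"]) simp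
      have H2: "same_class_H2 val A (val x) (val f) \<or> val f < val x"
      proof (cases "0 < val v")
        case True
        then have "0 < val v + val v" by (simp add: add_pos_pos)
        then show ?thesis using vx by simp
      next
        case False
        then have "inverse v \<in> val_ring val" using vinv v by (simp add: val_ring_def)
        then have "val v \<in> H_grp val A" using vA v BA by (auto simp: H_grp_def)
        then show ?thesis using vx by (auto simp: same_class_H2_def)
      qed
      have wu: "w \<in> val_units val" using w by (simp add: val_units_def)
      have "an x = an f * ((an v * an v) * an w)"
        using xe an_mult v w assms(10) by simp
      also have "\<dots> = an f * sum_list (map (\<lambda>c. c^2) (map (\<lambda>c. an v * c) cs))"
        using an_unit[OF wu] cs
        by (simp add: o_def power2_eq_square sum_list_const_mult[symmetric] mult_ac)
      finally have "an x \<in> qqm_gen UNIV (an f)" unfolding qqm_gen_def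
        by (intro CollectI exI[of _ "map (\<lambda>c. an v * c) cs"]) simp
      then show ?thesis using x0 xA G2 H2 by (simp add: Phi_def)
    qed
  next
    fix x assume xP: "x \<in> Phi val an A (qqm_gen UNIV (an f)) (val f)"
    show "x \<in> qqm_gen A f"
    proof (cases "x = 0")
      case True
      then show ?thesis unfolding qqm_gen_def by (intro CollectI exI[of _ "[]"]) simp
    next
      case False
      then have xA: "x \<in> A" and G2: "same_class_G2 (val x) (val f)"
        and H2: "same_class_H2 val A (val x) (val f) \<or> val f < val x"
        and M: "an x \<in> qqm_gen UNIV (an f)" using xP by (auto simp: Phi_def)
      from M obtain cs where cs: "an x = an f * sum_list (map (\<lambda>c. c^2) cs)"
        by (auto simp: qqm_gen_def)
      obtain a where a: "a \<in> A" "a \<noteq> 0" "val x - val f = val a + val a"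
      proof -
        from H2 show ?thesis
        proof
          assume "same_class_H2 val A (val x) (val f)"
          then show ?thesis using that by (auto simp: same_class_H2_def H_grp_def)
        next
          assume lt: "val f < val x"
          from G2 obtain h where h: "val x - val f = h + h" by (auto simp: same_class_G2_def)
          have "0 < val x - val f" using lt by simp
          then have "0 < h + h" using h by metis
          then have "0 < h" by (rule double_pos)
          obtain b where "b \<noteq> 0" "val b = h" using vsurj by blast
          then have "b \<in> A" using BA \<open>0 < h\<close> by (simp add: val_ring_def)
          then show ?thesis using that h \<open>b \<noteq> 0\<close> \<open>val b = h\<close> by blast
        qed
      qed
      define lift where "lift c = (SOME b. b \<in> val_ring val \<and> pi b = c)" for c
      have lift: "\<And>c. lift c \<in> val_ring val \<and> pi (lift c) = c"
        unfolding lift_def using pi_surj by (metis (mono_tags, lifting) someI_ex)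
      define bs where "bs = map (\<lambda>c. lift (c / an a)) cs"
      have bsB: "set bs \<subseteq> val_ring val" using lift by (auto simp: bs_def)
      define s where "s = sum_list (map (\<lambda>u. u^2) bs)"
      have sB: "s \<in> val_ring val" and pis: "pi s = sum_list (map (\<lambda>u. (pi u)^2) bs)"
        using sumsq_B[OF bsB] by (simp_all add: s_def)
      have ana: "an a \<noteq> 0" using an_nz a by simp
      have "pi s = sum_list (map (\<lambda>c. (c / an a)^2) cs)"
        using pis lift by (simp add: bs_def o_def)
      also have "\<dots> = inverse (an a * an a) * sum_list (map (\<lambda>c. c^2) cs)"
      proof -
        have "map (\<lambda>c. (c / an a)^2) cs = map (\<lambda>c. inverse (an a * an a) * c^2) cs"
          by (intro map_cong) (simp_all add: power_divide power2_eq_square divide_inverse mult.commute)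
        then show ?thesis by (simp only: sum_list_const_mult)
      qed
      finally have pis2: "pi s = inverse (an a * an a) * sum_list (map (\<lambda>c. c^2) cs)" .
      have sum0: "sum_list (map (\<lambda>c. c^2) cs) \<noteq> 0" using cs an_nz False by force
      have "pi s \<noteq> 0" using pis2 sum0 ana by simp
      then have s0: "s \<noteq> 0" "val s = 0" using unit_of_pi sB by auto
      define y where "y = f * (a * a) * s"
      have y0: "y \<noteq> 0" using s0 a assms(10) by (simp add: y_def)
      have vy: "val y = val x" using a s0 assms(10) vmult by (simp add: y_def algebra_simps)
      have su: "s \<in> val_units val" using s0 by (simp add: val_units_def)
      have "an y = an f * (an a * an a) * an s" using an_mult a s0 assms(10) by (simp add: y_def)
      then have any: "an y = an x" using an_unit[OF su] pis2 cs ana by (simp add: field_simps)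
      define q where "q = x / y"
      have q0: "q \<noteq> 0" using False y0 by (simp add: q_def)
      have xq: "x = q * y" using y0 by (simp add: q_def)
      have "val x = val q + val y" using xq vmult q0 y0 by simp
      then have vq: "val q = 0" using vy by simp
      have "an x = an q * an y" using xq an_mult q0 y0 by simp
      then have anq: "an q = 1" using any an_nz False by (metis mult_cancel_right2)
      have qu: "q \<in> val_units val" using q0 vq by (simp add: val_units_def)
      then have "strict_unit val pi q" using an_unit[OF qu] anq by (simp add: strict_unit_def)
      then obtain z where z: "q = z^2" using assms(5) by (auto simp: two_henselian_def)
      have z0: "z \<noteq> 0" using z q0 by auto
      have "val z + val z = 0" using vq z vmult z0 by (simp add: power2_eq_square)
      then have "val z = 0" by (rule double_zero)
      then have zA: "z \<in> A" using BA by (simp add: val_ring_def)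
      define ts where "ts = map (\<lambda>b. z * a * b) bs"
      have tsA: "set ts \<subseteq> A" using bsB BA zA a Amult by (auto simp: ts_def)
      have "x = f * ((z * a)^2 * s)" using xq z by (simp add: y_def power2_eq_square algebra_simps)
      also have "\<dots> = f * sum_list (map (\<lambda>u. u^2) ts)"
        by (simp add: s_def ts_def o_def sum_list_const_mult[symmetric] power_mult_distrib)
      finally show ?thesis using tsA by (auto simp: qqm_gen_def)
    qed
  qed
qed

end
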